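(* Let $\lambda>0$, $v_2<v_1$ with either $v_2<0<v_1$ or $0<v_2<v_1$, $t\ge0$ and $j\in\{1,2\}$. With $\Delta_j^\lambda(\xi,t)$ the mean-square distance (defined in the context) between the reset process with reset rate $\xi>0$ and the process without resets, one has $$\lim_{\xi\to+\infty}\Delta_j^\lambda(\xi,t)=E_j[X^2(t)]=\frac{t^2[3v_j^2+\lambda t(v_1^2+v_1v_2+v_2^2)]}{3(1+\lambda t)}.$$
   Context: GCP with intensity $\lambda>0$: a Poisson process whose rate is random, exponentially distributed with mean $\lambda$; increments satisfy $P\{\tilde N_\lambda(t+s)-\tilde N_\lambda(t)=k\}=\frac{1}{1+\lambda s}(\frac{\lambda s}{1+\lambda s})^k$. Process without resets $X(t)$: a particle starts at the origin with velocity $v_j$ ($v_1,v_2\neq0$, $v_2<v_1$), moves with velocity alternating between $v_1$ and $v_2$, the periods at velocity $v_1$ and at $v_2$ governed by two independent GCPs of intensity $\lambda$; its law given $V(0)=v_j$ has generalized density $p(x,t|v_j)=\frac{\delta(x-v_jt)}{1+\lambda t}+\mathbb 1_{\{v_2t<x<v_1t\}}\frac{\lambda}{(v_1-v_2)(1+\lambda t)}$ ($\delta$ Dirac delta), with $E_j[X(t)]=\frac{t[2v_j+\lambda t(v_1+v_2)]}{2(1+\lambda t)}$ and $E_j[X^2(t)]$ as in the claim. Reset process $\tilde X(t)$ (reset rate $\xi>0$): same dynamics but instantaneously reset to the origin at the epochs of an independent Poisson process of rate $\xi$, restarting afresh with velocity $v_j$; its density is $\tilde p(x,t|v_j)=e^{-\xi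 t}p(x,t|v_j)+\xi\int_0^te^{-\xi s}p(x,s|v_j)ds$. $E_j$ denotes expectation conditional on start at the origin with velocity $v_j$. Mean-square distance: $\Delta_j^\lambda(\xi,t):=E_j[\tilde X^2(t)]+E_j[X^2(t)]-2E_j[\tilde X(t)]E_j[X(t)]$. *)

theory Defs
  imports "HOL-Analysis.Analysis"
begin

text \<open>Expectation of f(X(t)) for the process without resets, started at the origin
with velocity vj, computed against the generalized density
p(x,t|vj) = delta(x - vj t)/(1+lam t) + 1{v2 t < x < v1 t} lam/((v1-v2)(1+lam t)).\<close>
definition gcp_expect :: "real \<Rightarrow> real \<Rightarrow> real \<Rightarrow> real \<Rightarrow> (real \<Rightarrow> real) \<Rightarrow> real \<Rightarrow> real" where
  "gcp_expect lam v1 v2 vj f t =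
     f (vj * t) / (1 + lam * t)
     + integral {v2 * t .. v1 * t} (\<lambda>x. f x * lam / ((v1 - v2) * (1 + lam * t)))"

definition reset_expect :: "real \<Rightarrow> real \<Rightarrow> real \<Rightarrow> real \<Rightarrow> real \<Rightarrow> (real \<Rightarrow> real) \<Rightarrow> real \<Rightarrow> real" where
  "reset_expect lam xi v1 v2 vj f t =
     exp (- xi * t) * gcp_expect lam v1 v2 vj f t
     + xi * integral {0 .. t} (\<lambda>s. exp (- xi * s) * gcp_expect lam v1 v2 vj f s)"

definition msd :: "real \<Rightarrow> real \<Rightarrow> real \<Rightarrow> real \<Rightarrow> real \<Rightarrow> real \<Rightarrow> real" where
  "msd lam xi v1 v2 vj t =
     reset_expect lam xi v1 v2 vj (\<lambda>x. x ^ 2) t + gcp_expect lam v1 v2 vj (\<lambda>x. x ^ 2) t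
     - 2 * reset_expect lam xi v1 v2 vj (\<lambda>x. x) t * gcp_expect lam v1 v2 vj (\<lambda>x. x) t"

end

theory Submission imports Defs "HOL-Real_Asymp.Real_Asymp" begin

lemma int_pow:
  fixes a b :: real
  assumes "a \<le> b"
  shows "((\<lambda>x. x^k * c) has_integral ((b^Suc k - a^Suc k)/Suc k * c)) {a..b}"
proof -
  have "((\<lambda>x. x^k) has_integral (b^Suc k / Suc k - a^Suc k / Suc k)) {a..b}"
    apply (rule fundamental_theorem_of_calculus[OF assms])
    apply (rule has_real_derivative_iff_has_vector_derivative[THEN iffD1])
    apply (rule DERIV_subset[of _ _ _ UNIV])
     apply (intro derivative_eq_intros)
    by (auto simp del: of_nat_Suc)
  then have "((\<lambda>x. x^k) has_integral ((b^Suc k - a^Suc k)/Suc k)) {a..b}"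
    by (simp add: diff_divide_distrib)
  then show ?thesis by (rule has_integral_mult_left)
qed

lemma canc: "(a::real) \<noteq> 0 \<Longrightarrow> (a * y) / k * (l / (a * c)) = y * l / (k * c)"
  by (cases "k = 0"; cases "c = 0") (auto simp: field_simps)

lemma g1:
  assumes "lam > 0" "v2 < v1" "s \<ge> 0"
  shows "gcp_expect lam v1 v2 vj (\<lambda>x. x) s = s * (2 * vj + lam * s * (v1 + v2)) / (2 * (1 + lam * s))"
proof -
  have le: "v2 * s \<le> v1 * s" using assms by (simp add: mult_right_mono)
  have p: "1 + lam * s > 0" using assms by (simp add: add_pos_nonneg)
  have d: "v1 - v2 \<noteq> 0" using assms by simp
  have "integral {v2 * s .. v1 * s} (\<lambda>x. x * lam / ((v1 - v2) * (1 + lam * s)))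
     = ((v1 * s)^2 - (v2 * s)^2)/2 * (lam / ((v1 - v2) * (1 + lam * s)))"
    using int_pow[OF le, of 1 "lam / ((v1 - v2) * (1 + lam * s))"]
    by (intro integral_unique) (simp add: numeral_2_eq_2)
  also have "\<dots> = ((v1 - v2) * ((v1 + v2) * s^2)) / 2 * (lam / ((v1 - v2) * (1 + lam * s)))"
    by (simp add: algebra_simps power2_eq_square)
  also have "\<dots> = (v1 + v2) * s^2 * lam / (2 * (1 + lam * s))"
    using d p by (simp add: canc)
  finally have I: "integral {v2 * s .. v1 * s} (\<lambda>x. x * lam / ((v1 - v2) * (1 + lam * s)))
     = (v1 + v2) * s^2 * lam / (2 * (1 + lam * s))" .
  have "\<And>c. c > 0 \<Longrightarrow> vj * s / c + (v1 + v2) * s^2 * lam / (2 * c) = s * (2 * vj + lam * s * (v1 + v2)) / (2 * c)"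
    by (simp add: field_simps power2_eq_square)
  from this[OF p] show ?thesis unfolding gcp_expect_def I by simp
qed

lemma g2:
  assumes "lam > 0" "v2 < v1" "s \<ge> 0"
  shows "gcp_expect lam v1 v2 vj (\<lambda>x. x^2) s = s^2 * (3 * vj^2 + lam * s * (v1^2 + v1 * v2 + v2^2)) / (3 * (1 + lam * s))"
proof -
  have le: "v2 * s \<le> v1 * s" using assms by (simp add: mult_right_mono)
  have p: "1 + lam * s > 0" using assms by (simp add: add_pos_nonneg)
  have d: "v1 - v2 \<noteq> 0" using assms by simp
  have "integral {v2 * s .. v1 * s} (\<lambda>x. x^2 * lam / ((v1 - v2) * (1 + lam * s)))
     = ((v1 * s)^3 - (v2 * s)^3)/3 * (lam / ((v1 - v2) * (1 + lam * s)))"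
    using int_pow[OF le, of 2 "lam / ((v1 - v2) * (1 + lam * s))"]
    by (intro integral_unique) (simp add: numeral_3_eq_3)
  also have "\<dots> = ((v1 - v2) * ((v1^2 + v1 * v2 + v2^2) * s^3)) / 3 * (lam / ((v1 - v2) * (1 + lam * s)))"
    by (simp add: algebra_simps power2_eq_square power3_eq_cube)
  also have "\<dots> = (v1^2 + v1 * v2 + v2^2) * s^3 * lam / (3 * (1 + lam * s))"
    using d p by (simp add: canc)
  finally have I: "integral {v2 * s .. v1 * s} (\<lambda>x. x^2 * lam / ((v1 - v2) * (1 + lam * s)))
     = (v1^2 + v1 * v2 + v2^2) * s^3 * lam / (3 * (1 + lam * s))" .
  have "\<And>c. c > 0 \<Longrightarrow> (vj * s)^2 / c + (v1^2 + v1 * v2 + v2^2) * s^3 * lam / (3 * c) = s^2 * (3 * vj^2 + lam * s * (v1^2 + v1 * v2 + v2^2)) / (3 * c)"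
    by (simp add: field_simps power2_eq_square power3_eq_cube)
  from this[OF p] show ?thesis unfolding gcp_expect_def I by simp
qed

lemma int_sexp:
  fixes xi t :: real
  assumes "xi > 0" "t \<ge> 0"
  shows "((\<lambda>s. s * exp (- xi * s)) has_integral
     ((- (t / xi + 1 / xi^2) * exp (- xi * t)) - (- (0 / xi + 1 / xi^2) * exp (- xi * 0)))) {0..t}"
proof -
  have d: "((\<lambda>s. - (s / xi + 1 / xi^2) * exp (- xi * s)) has_real_derivative x * exp (- xi * x)) (at x)" for x
    using assms by (auto intro!: derivative_eq_intros simp: field_simps power2_eq_square)
  show ?thesis
    apply (rule fundamental_theorem_of_calculus[OF assms(2)])
    apply (rule has_real_derivative_iff_has_vector_derivative[THEN iffD1])
    apply (rule DERIV_subset[OF d])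
    by simp
qed

lemma int_sexp_le:
  fixes xi t :: real
  assumes "xi > 0" "t \<ge> 0"
  shows "integral {0..t} (\<lambda>s. s * exp (- xi * s)) \<le> 1 / xi^2"
proof -
  have "integral {0..t} (\<lambda>s. s * exp (- xi * s)) = 1 / xi^2 - (t / xi + 1 / xi^2) * exp (- xi * t)"
    using integral_unique[OF int_sexp[OF assms]] by (simp add: algebra_simps)
  moreover have "(t / xi + 1 / xi^2) * exp (- xi * t) \<ge> 0" using assms by simp
  ultimately show ?thesis by linarith
qed

lemma reset_lim:
  fixes g :: "real \<Rightarrow> real" and t C :: real
  assumes t: "t \<ge> 0" and C: "C \<ge> 0" and g0: "g 0 = 0"
    and bd: "\<And>s. s \<in> {0..t} \<Longrightarrow> \<bar>g s\<bar> \<le> C * s"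
    and cont: "continuous_on {0..t} g"
  shows "((\<lambda>xi. exp (- xi * t) * g t + xi * integral {0..t} (\<lambda>s. exp (- xi * s) * g s)) \<longlongrightarrow> 0) at_top"
proof -
  have A: "((\<lambda>xi. exp (- xi * t) * g t) \<longlongrightarrow> 0) at_top"
  proof (cases "t = 0")
    case True then show ?thesis using g0 by simp
  next
    case False
    then have "t > 0" using t by simp
    then have "((\<lambda>xi. exp (- xi * t)) \<longlongrightarrow> 0) at_top" by real_asymp
    then show ?thesis by (rule tendsto_mult_left_zero)
  qed
  have B: "((\<lambda>xi. xi * integral {0..t} (\<lambda>s. exp (- xi * s) * g s)) \<longlongrightarrow> 0) at_top"
  proof (rule Lim_null_comparison)
    show "((\<lambda>xi. C / xi) \<longlongrightarrow> 0) at_top" by real_asymp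
    show "\<forall>\<^sub>F xi in at_top. norm (xi * integral {0..t} (\<lambda>s. exp (- xi * s) * g s)) \<le> C / xi"
      using eventually_gt_at_top[of 0]
    proof eventually_elim
      case (elim xi)
      have i1: "(\<lambda>s. exp (- xi * s) * g s) integrable_on {0..t}"
        by (intro integrable_continuous_interval continuous_intros cont)
      have i2: "(\<lambda>s. C * (s * exp (- xi * s))) integrable_on {0..t}"
        by (intro integrable_continuous_interval continuous_intros)
      have "norm (integral {0..t} (\<lambda>s. exp (- xi * s) * g s)) \<le> integral {0..t} (\<lambda>s. C * (s * exp (- xi * s)))"
      proof (rule integral_norm_bound_integral[OF i1 i2])
        fix s assume s: "s \<in> {0..t}"
        have "norm (exp (- xi * s) * g s) = exp (- xi * s) * \<bar>g s\<bar>" by (simp add: abs_mult)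
        also have "\<dots> \<le> exp (- xi * s) * (C * s)" using bd[OF s] by (simp add: mult_left_mono)
        finally show "norm (exp (- xi * s) * g s) \<le> C * (s * exp (- xi * s))" by (simp add: ac_simps)
      qed
      also have "\<dots> = C * integral {0..t} (\<lambda>s. s * exp (- xi * s))" by simp
      also have "\<dots> \<le> C * (1 / xi^2)" using mult_left_mono[OF int_sexp_le[OF elim t] C] by simp
      finally have "norm (integral {0..t} (\<lambda>s. exp (- xi * s) * g s)) \<le> C / xi^2" by simp
      then have "xi * norm (integral {0..t} (\<lambda>s. exp (- xi * s) * g s)) \<le> xi * (C / xi^2)"
        using elim by (intro mult_left_mono) auto
      also have "xi * (C / xi^2) = C / xi" using elim by (simp add: power2_eq_square)
      finally show ?case using elim by (simp add: abs_mult)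
    qed
  qed
  show ?thesis using tendsto_add[OF A B] by simp
qed

lemma qr:
  fixes lam s :: real
  assumes "lam > 0" "s \<ge> 0"
  shows "0 \<le> lam * s / (1 + lam * s)" "lam * s / (1 + lam * s) \<le> 1"
    "0 \<le> 1 / (1 + lam * s)" "1 / (1 + lam * s) \<le> 1"
proof -
  have "1 + lam * s > 0" using assms by (simp add: add_pos_nonneg)
  then show "0 \<le> lam * s / (1 + lam * s)" "lam * s / (1 + lam * s) \<le> 1"
    "0 \<le> 1 / (1 + lam * s)" "1 / (1 + lam * s) \<le> 1"
    using assms by (auto simp: divide_simps)
qed

lemma tri: "(q::real) \<ge> 0 \<Longrightarrow> r \<ge> 0 \<Longrightarrow> \<bar>a * q + b * r\<bar> \<le> \<bar>a\<bar> * q + \<bar>b\<bar> * r"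
  by (metis abs_mult abs_of_nonneg abs_triangle_ineq)

lemma main_gen:
  fixes lam t v1 v2 vj :: real
  assumes lam: "lam > 0" and v: "v2 < v1" and t: "t \<ge> 0"
  shows "((\<lambda>xi. msd lam xi v1 v2 vj t) \<longlongrightarrow> gcp_expect lam v1 v2 vj (\<lambda>x. x ^ 2) t) at_top"
proof -
  define g1 where "g1 = gcp_expect lam v1 v2 vj (\<lambda>x. x)"
  define g2 where "g2 = gcp_expect lam v1 v2 vj (\<lambda>x. x ^ 2)"
  have pos: "\<And>s. s \<in> {0..t} \<Longrightarrow> 1 + lam * s \<noteq> 0"
    using lam by (auto simp: add_pos_nonneg intro!: less_imp_neq[symmetric])
  have e1: "g1 s = s * vj * (1 / (1 + lam * s)) + s * (v1 + v2) / 2 * (lam * s / (1 + lam * s))" if s: "s \<in> {0..t}" for s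
  proof -
    have c: "1 + lam * s > 0" using s lam by (simp add: add_pos_nonneg)
    have gen: "\<And>c. c > 0 \<Longrightarrow> s * (2 * vj + lam * s * (v1 + v2)) / (2 * c) = s * vj * (1 / c) + s * (v1 + v2) / 2 * (lam * s / c)"
      by (simp add: field_simps)
    show ?thesis unfolding g1_def using g1[OF lam v, of s] gen[OF c] s by simp
  qed
  have e2: "g2 s = s^2 * vj^2 * (1 / (1 + lam * s)) + s^2 * (v1^2 + v1 * v2 + v2^2) / 3 * (lam * s / (1 + lam * s))" if s: "s \<in> {0..t}" for s
  proof -
    have c: "1 + lam * s > 0" using s lam by (simp add: add_pos_nonneg)
    have gen: "\<And>c. c > 0 \<Longrightarrow> s^2 * (3 * vj^2 + lam * s * (v1^2 + v1 * v2 + v2^2)) / (3 * c) = s^2 * vj^2 * (1 / c) + s^2 * (v1^2 + v1 * v2 + v2^2) / 3 * (lam * s / c)"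
      by (simp add: field_simps)
    show ?thesis unfolding g2_def using g2[OF lam v, of s] gen[OF c] s by simp
  qed
  have c1: "continuous_on {0..t} g1"
    apply (rule continuous_on_cong[THEN iffD2, OF refl e1], assumption)
    using pos by (intro continuous_intros) auto
  have c2: "continuous_on {0..t} g2"
    apply (rule continuous_on_cong[THEN iffD2, OF refl e2], assumption)
    using pos by (intro continuous_intros) auto
  have b1: "\<bar>g1 s\<bar> \<le> (\<bar>vj\<bar> + \<bar>v1\<bar> + \<bar>v2\<bar>) * s" if s: "s \<in> {0..t}" for s
  proof -
    from s have s0: "s \<ge> 0" by simp
    note q = qr[OF lam s0]
    have "\<bar>g1 s\<bar> \<le> \<bar>s * vj\<bar> * (1 / (1 + lam * s)) + \<bar>s * (v1 + v2) / 2\<bar> * (lam * s / (1 + lam * s))"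
      unfolding e1[OF s] using q by (intro tri) auto
    also have "\<dots> \<le> \<bar>s * vj\<bar> * 1 + \<bar>s * (v1 + v2) / 2\<bar> * 1"
      using q by (intro add_mono mult_left_mono) auto
    also have "\<dots> = s * \<bar>vj\<bar> + s * \<bar>v1 + v2\<bar> / 2"
      using s0 by (simp only: mult_1_right abs_mult abs_divide abs_of_nonneg)
    also have "\<dots> = s * (\<bar>vj\<bar> + \<bar>v1 + v2\<bar> / 2)"
      by (simp add: distrib_left)
    also have "\<dots> \<le> s * (\<bar>vj\<bar> + \<bar>v1\<bar> + \<bar>v2\<bar>)"
      using s0 abs_triangle_ineq[of v1 v2] by (intro mult_left_mono) auto
    also have "\<dots> = (\<bar>vj\<bar> + \<bar>v1\<bar> + \<bar>v2\<bar>) * s" by simp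
    finally show ?thesis .
  qed
  have b2: "\<bar>g2 s\<bar> \<le> (t * (vj^2 + \<bar>v1^2 + v1 * v2 + v2^2\<bar>)) * s" if s: "s \<in> {0..t}" for s
  proof -
    from s have s0: "s \<ge> 0" and st: "s \<le> t" by simp_all
    note q = qr[OF lam s0]
    have "\<bar>g2 s\<bar> \<le> \<bar>s^2 * vj^2\<bar> * (1 / (1 + lam * s)) + \<bar>s^2 * (v1^2 + v1 * v2 + v2^2) / 3\<bar> * (lam * s / (1 + lam * s))"
      unfolding e2[OF s] using q by (intro tri) auto
    also have "\<dots> \<le> \<bar>s^2 * vj^2\<bar> * 1 + \<bar>s^2 * (v1^2 + v1 * v2 + v2^2) / 3\<bar> * 1"
      using q by (intro add_mono mult_left_mono) auto
    also have "\<dots> = s^2 * vj^2 + s^2 * \<bar>v1^2 + v1 * v2 + v2^2\<bar> / 3"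
      by (simp only: mult_1_right abs_mult abs_divide abs_power2)
    also have "\<dots> = s^2 * (vj^2 + \<bar>v1^2 + v1 * v2 + v2^2\<bar> / 3)"
      by (simp add: distrib_left)
    also have "\<dots> \<le> s^2 * (vj^2 + \<bar>v1^2 + v1 * v2 + v2^2\<bar>)"
      by (intro mult_left_mono) auto
    also have "\<dots> = s * (s * (vj^2 + \<bar>v1^2 + v1 * v2 + v2^2\<bar>))"
      by (simp add: power2_eq_square)
    also have "\<dots> \<le> s * (t * (vj^2 + \<bar>v1^2 + v1 * v2 + v2^2\<bar>))"
      using s0 st by (intro mult_left_mono mult_right_mono) auto
    also have "\<dots> = (t * (vj^2 + \<bar>v1^2 + v1 * v2 + v2^2\<bar>)) * s" by simp
    finally show ?thesis .
  qed
  have z1: "g1 0 = 0" unfolding g1_def gcp_expect_def by simp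
  have z2: "g2 0 = 0" unfolding g2_def gcp_expect_def by simp
  have C1: "0 \<le> \<bar>vj\<bar> + \<bar>v1\<bar> + \<bar>v2\<bar>" by simp
  have C2: "0 \<le> t * (vj^2 + \<bar>v1^2 + v1 * v2 + v2^2\<bar>)" using t by simp
  have L1: "((\<lambda>xi. reset_expect lam xi v1 v2 vj (\<lambda>x. x) t) \<longlongrightarrow> 0) at_top"
    using reset_lim[OF t C1 z1 b1 c1] unfolding reset_expect_def g1_def by simp
  have L2: "((\<lambda>xi. reset_expect lam xi v1 v2 vj (\<lambda>x. x ^ 2) t) \<longlongrightarrow> 0) at_top"
    using reset_lim[OF t C2 z2 b2 c2] unfolding reset_expect_def g2_def by simp
  have "((\<lambda>xi. reset_expect lam xi v1 v2 vj (\<lambda>x. x ^ 2) t + g2 t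
          - 2 * reset_expect lam xi v1 v2 vj (\<lambda>x. x) t * g1 t) \<longlongrightarrow> 0 + g2 t - 2 * 0 * g1 t) at_top"
    by (intro tendsto_intros L1 L2)
  then show ?thesis unfolding msd_def g1_def g2_def by simp
qed

theorem corollary6:
  fixes lam t :: real and v :: "nat \<Rightarrow> real" and j :: nat
  assumes "lam > 0" and "v 2 < v 1"
    and "(v 2 < 0 \<and> 0 < v 1) \<or> (0 < v 2 \<and> v 2 < v 1)"
    and "t \<ge> 0" and "j \<in> {1, 2}"
  shows "((\<lambda>xi. msd lam xi (v 1) (v 2) (v j) t)
            \<longlongrightarrow> gcp_expect lam (v 1) (v 2) (v j) (\<lambda>x. x ^ 2) t) at_top
       \<and> gcp_expect lam (v 1) (v 2) (v j) (\<lambda>x. x ^ 2) t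
           = t^2 * (3 * (v j)^2 + lam * t * ((v 1)^2 + v 1 * v 2 + (v 2)^2)) / (3 * (1 + lam * t))"
  using main_gen[OF assms(1,2,4)] g2[OF assms(1,2,4)] by simp

end
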